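(* (IG quadrature.) Let $\gamma>0$, $\delta>0$, $\sigma=\sqrt{\gamma\delta}$, $n\ge1$, and let $\{z_k\}_{k=1}^n$ and $\{h_k\}_{k=1}^n$ be the points and weights of the $n$-point Gauss--Hermite quadrature with respect to the standard normal density. Define $$ x_k=\frac{\delta}{\gamma}\,\phi_\sigma^{-1}(z_k),\qquad w_k=\frac{2h_k}{1+\phi_\sigma^{-1}(z_k)}. $$ Then $\{x_k\}$, $\{w_k\}$ serve as a numerical quadrature with respect to the density $f_{\mathrm{IG}}(x\,|\,\gamma,\delta)$ on $(0,\infty)$, and it is exact for moments of integer order $r$ with $1-n\le r\le n$: if $X\sim\mathrm{IG}(\gamma,\delta)$, then $\mathbb{E}(X^r)=\sum_{k=1}^n x_k^r\,w_k$ for every integer $r\in\{1-n,\dots,n\}$.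
   Context: The inverse Gaussian distribution $\mathrm{IG}(\gamma,\delta)$ has density $f_{\mathrm{IG}}(x\,|\,\gamma,\delta)=\frac{\delta}{\sqrt{2\pi x^3}}\exp\left(-\frac{(\gamma x-\delta)^2}{2x}\right)$ for $x>0$. The Gauss--Hermite quadrature here is with respect to $n(z)=e^{-z^2/2}/\sqrt{2\pi}$: $z_k$ are the roots of the probabilists' Hermite polynomial $He_n$ and the weights $h_k$ satisfy $\sum_k h_k q(z_k)=\int q(z)n(z)\,dz$ for all polynomials $q$ of degree at most $2n-1$. For $\sigma>0$, $\phi_\sigma^{-1}(z)=1+\frac{z^2}{2\sigma^2}+\frac{z}{\sigma}\sqrt{1+\frac{z^2}{4\sigma^2}}$ is the inverse of $\phi_\sigma(x)=\sigma\left(\sqrt{x}-\frac{1}{\sqrt{x}}\right)$, $x>0$. *)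

theory Defs
  imports "HOL-Probability.Probability" "HOL-Computational_Algebra.Polynomial"
begin

fun hermite_prob :: "nat \<Rightarrow> real poly" where
  "hermite_prob 0 = 1"
| "hermite_prob (Suc 0) = [:0, 1:]"
| "hermite_prob (Suc (Suc n)) =
     [:0, 1:] * hermite_prob (Suc n) - smult (real (Suc n)) (hermite_prob n)"

definition gauss_hermite :: "nat \<Rightarrow> (nat \<Rightarrow> real) \<Rightarrow> (nat \<Rightarrow> real) \<Rightarrow> bool" where
  "gauss_hermite n z h \<longleftrightarrow>
     inj_on z {1..n} \<and>
     (\<forall>k\<in>{1..n}. poly (hermite_prob n) (z k) = 0) \<and>
     (\<forall>q :: real poly. degree q \<le> 2 * n - 1 \<longrightarrow>
        (\<Sum>k=1..n. h k * poly q (z k)) = (LINT t|lborel. poly q t * std_normal_density t))"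

definition ig_density :: "real \<Rightarrow> real \<Rightarrow> real \<Rightarrow> real" where
  "ig_density \<gamma> \<delta> x = \<delta> / sqrt (2 * pi * x ^ 3) * exp (- ((\<gamma> * x - \<delta>)\<^sup>2) / (2 * x))"

definition phi_inv :: "real \<Rightarrow> real \<Rightarrow> real" where
  "phi_inv \<sigma> z = 1 + z\<^sup>2 / (2 * \<sigma>\<^sup>2) + z / \<sigma> * sqrt (1 + z\<^sup>2 / (4 * \<sigma>\<^sup>2))"

end

theory Submission imports Defs "HOL-Analysis.Change_Of_Vars" begin

definition ua :: "real \<Rightarrow> real \<Rightarrow> real" where
  "ua \<sigma> z = z / (2*\<sigma>) + sqrt (1 + (z/(2*\<sigma>))\<^sup>2)"

lemma sq_gt_abs: "sqrt (1 + a\<^sup>2) > \<bar>a\<bar>"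
  by (metis abs_of_nonneg less_add_one real_sqrt_abs real_sqrt_less_iff real_sqrt_ge_zero add.commute)

lemma ua_pos: "ua \<sigma> z > 0"
  unfolding ua_def using sq_gt_abs[of "z/(2*\<sigma>)"] by linarith

lemma ua_inv: "1 / ua \<sigma> z = sqrt (1 + (z/(2*\<sigma>))\<^sup>2) - z/(2*\<sigma>)"
proof -
  define a where "a = z/(2*\<sigma>)"
  define s where "s = sqrt (1 + a\<^sup>2)"
  have s2: "s\<^sup>2 = 1 + a\<^sup>2" unfolding s_def by simp
  have "ua \<sigma> z = a + s" unfolding ua_def a_def s_def by simp
  moreover have "a + s > 0" using ua_pos[of \<sigma> z] unfolding ua_def a_def s_def by simp
  moreover have "(a+s)*(s-a) = 1" using s2 by (simp add: algebra_simps power2_eq_square)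
  ultimately show ?thesis unfolding a_def[symmetric] s_def[symmetric]
    by (simp add: field_simps)
qed

lemma ua_diff: "\<sigma> \<noteq> 0 \<Longrightarrow> ua \<sigma> z - 1 / ua \<sigma> z = z / \<sigma>"
  unfolding ua_inv by (simp add: ua_def field_simps)

lemma ua_sum: "ua \<sigma> z + 1 / ua \<sigma> z = 2 * sqrt (1 + (z/(2*\<sigma>))\<^sup>2)"
  unfolding ua_inv by (simp add: ua_def field_simps)

lemma ua_neg: "ua \<sigma> (-z) = 1 / ua \<sigma> z"
  unfolding ua_inv by (simp add: ua_def field_simps power2_eq_square)

lemma phi_inv_ua: "\<sigma> > 0 \<Longrightarrow> phi_inv \<sigma> z = (ua \<sigma> z)\<^sup>2"
proof -
  assume "\<sigma> > 0"
  have e: "z\<^sup>2 / (4 * \<sigma>\<^sup>2) = (z/(2*\<sigma>))\<^sup>2" by (simp add: power2_eq_square)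
  have s2: "(sqrt (1 + (z/(2*\<sigma>))\<^sup>2))\<^sup>2 = 1 + (z/(2*\<sigma>))\<^sup>2" by simp
  show ?thesis unfolding phi_inv_def ua_def e using s2 \<open>\<sigma>>0\<close>
    by (simp add: power2_sum field_simps power2_eq_square)
qed


fun fibp :: "real \<Rightarrow> nat \<Rightarrow> real poly" where
  "fibp c 0 = 0" | "fibp c (Suc 0) = 1"
| "fibp c (Suc (Suc m)) = [:0,c:] * fibp c (Suc m) + fibp c m"

lemma fibp_id:
  "u \<noteq> 0 \<Longrightarrow> c * t = u - 1/u \<Longrightarrow> poly (fibp c m) t * (u + 1/u) = u^m - (-1/u)^m"
proof (induction c m rule: fibp.induct)
  case (3 c m)
  have "poly (fibp c (Suc (Suc m))) t * (u + 1/u) = (c*t) * (poly (fibp c (Suc m)) t * (u+1/u)) + poly (fibp c m) t * (u+1/u)"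
    by (simp add: algebra_simps)
  also have "... = (u - 1/u)*(u^Suc m - (-1/u)^Suc m) + (u^m - (-1/u)^m)" using 3 by simp
  also have "... = u^(Suc(Suc m)) - (-1/u)^(Suc (Suc m))" using 3(3)
    by (simp add: field_simps power_Suc)
  finally show ?case .
qed (auto simp: field_simps)

lemma fibp_degree: "degree (fibp c m) \<le> m - 1"
proof (induction c m rule: fibp.induct)
  case (3 c m)
  have "degree ([:0,c:] * fibp c (Suc m)) \<le> 1 + degree (fibp c (Suc m))"
    by (rule order_trans[OF degree_mult_le]) simp
  then have a: "degree ([:0,c:] * fibp c (Suc m)) \<le> Suc m" using 3 by simp
  have b: "degree (fibp c m) \<le> Suc m" using 3 by linarith
  have "degree (fibp c (Suc (Suc m))) \<le> Suc m"
    by (simp only: fibp.simps) (rule degree_add_le[OF a b])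
  then show ?case by simp
qed auto

lemma powi_sym: "(u::real) \<noteq> 0 \<Longrightarrow> u powi k + u powi (-k) = u ^ nat \<bar>k\<bar> + 1 / u ^ nat \<bar>k\<bar>"
proof (cases "k \<ge> 0")
  case True
  then obtain n where "k = int n" by (metis nonneg_int_cases)
  then show ?thesis by (simp add: power_int_minus_divide)
next
  case False
  then obtain n where "k = - int n" by (metis neg_int_cases less_le not_le)
  then show ?thesis by (simp add: power_int_minus_divide)
qed


lemma hermite_parity: "poly (hermite_prob n) (-t) = (-1)^n * poly (hermite_prob n) t"
  by (induction n rule: hermite_prob.induct) (auto simp: algebra_simps)

lemma hermite_deg: "degree (hermite_prob n) \<le> n \<and> coeff (hermite_prob n) n = 1"
proof (induction n rule: hermite_prob.induct)
  case (3 n)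
  have d1: "degree ([:0, 1:] * hermite_prob (Suc n)) \<le> Suc (Suc n)"
    using 3 by (simp add: degree_pCons_eq_if)
  have d2: "degree (smult (real (Suc n)) (hermite_prob n)) \<le> Suc (Suc n)"
    using 3 by (meson degree_smult_le le_SucI order_trans)
  have "degree (hermite_prob (Suc (Suc n))) \<le> Suc (Suc n)"
    by (simp only: hermite_prob.simps) (rule order_trans[OF degree_diff_le_max]; use d1 d2 in auto)
  moreover have "coeff (hermite_prob n) (Suc (Suc n)) = 0"
    using 3 by (intro coeff_eq_0) auto
  ultimately show ?case using 3 by simp
qed auto


lemma std_normal_density_neg: "std_normal_density (-t) = std_normal_density t"
  by (simp add: std_normal_density_def)

lemma lborel_reflect: fixes f :: "real \<Rightarrow> real" shows "(\<integral>t. f (-t) \<partial>lborel) = (\<integral>t. (f t :: real) \<partial>lborel)"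
  using lborel_integral_real_affine[of "-1" f 0] by simp

lemma gh_sym:
  assumes gh: "gauss_hermite n z h" and n: "n \<ge> 1"
  shows "(\<Sum>k=1..n. h k * F (- z k)) = (\<Sum>k=1..n. h k * F (z k))"
proof -
  let ?I = "{1..n}"
  let ?H = "hermite_prob n"
  have inj: "inj_on z ?I" and root: "\<And>k. k\<in>?I \<Longrightarrow> poly ?H (z k) = 0"
    and ex: "\<And>q. degree q \<le> 2*n-1 \<Longrightarrow>
        (\<Sum>k=1..n. h k * poly q (z k)) = (LINT t|lborel. poly q t * std_normal_density t)"
    using gh unfolding gauss_hermite_def by auto
  have He0: "?H \<noteq> 0" using hermite_deg[of n] by auto
  have Zeq: "z ` ?I = {t. poly ?H t = 0}"
  proof (rule card_subset_eq)
    show "finite {t. poly ?H t = 0}" using poly_roots_finite[OF He0] .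
    show "z ` ?I \<subseteq> {t. poly ?H t = 0}" using root by auto
    have "card {t. poly ?H t = 0} \<le> n"
      using card_poly_roots_bound[OF He0] hermite_deg[of n] by linarith
    moreover have "card (z ` ?I) = n" using card_image[OF inj] by simp
    moreover have "card (z ` ?I) \<le> card {t. poly ?H t = 0}"
      using root by (intro card_mono[OF poly_roots_finite[OF He0]]) auto
    ultimately show "card (z ` ?I) = card {t. poly ?H t = 0}" by linarith
  qed
  have negZ: "- z k \<in> z ` ?I" if "k \<in> ?I" for k
    using Zeq root[OF that] hermite_parity[of n "z k"] by auto
  define p where "p k = the_inv_into ?I z (- z k)" for k
  have pI: "p k \<in> ?I" if "k \<in> ?I" for k
    unfolding p_def by (rule the_inv_into_into[OF inj negZ[OF that] subset_refl])
  have pz: "z (p k) = - z k" if "k \<in> ?I" for k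
    unfolding p_def using f_the_inv_into_f[OF inj negZ[OF that]] .
  have pp: "p (p k) = k" if "k \<in> ?I" for k
    using pz[OF pI[OF that]] pz[OF that] inj_onD[OF inj _ pI[OF pI[OF that]] that] by simp
  have bij: "bij_betw p ?I ?I"
  proof (rule bij_betwI[where g=p])
    show "p \<in> ?I \<rightarrow> ?I" using pI by blast
    then show "p \<in> ?I \<rightarrow> ?I" .
  qed (use pp in blast)+
  define L where "L k = (\<Prod>j\<in>?I-{k}. smult (1/(z k - z j)) [:- z j, 1:])" for k
  have polyL: "poly (L k) t = (\<Prod>j\<in>?I-{k}. (t - z j)/(z k - z j))" for k t
    unfolding L_def poly_prod by (intro prod.cong) (auto simp: diff_divide_distrib)
  have degL: "degree (L k) \<le> 2*n - 1" for k
  proof -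
    have "degree (L k) \<le> (\<Sum>j\<in>?I-{k}. degree (smult (1/(z k - z j)) [:- z j, 1:]))"
      unfolding L_def using degree_prod_sum_le[of "?I-{k}" "\<lambda>j. smult (1/(z k - z j)) [:- z j, 1:]"]
      by (simp only: o_def finite_Diff finite_atLeastAtMost)
    also have "\<dots> \<le> (\<Sum>j\<in>?I-{k}. 1)" by (intro sum_mono) (simp add: degree_smult_le)
    also have "\<dots> \<le> n" using card_Diff1_le[of "?I" k] by simp
    finally show ?thesis using n by linarith
  qed
  have Lval: "poly (L k) (z j) = (if j = k then 1 else 0)" if "k \<in> ?I" "j \<in> ?I" for k j
  proof (cases "j = k")
    case True
    have "poly (L k) (z j) = (\<Prod>i\<in>?I-{k}. 1)" unfolding polyL
    proof (intro prod.cong refl)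
      fix i assume "i \<in> ?I - {k}"
      then have "z k \<noteq> z i" using inj_onD[OF inj _ that(1)] by auto
      then show "(z j - z i) / (z k - z i) = 1" using True by simp
    qed
    then show ?thesis using True by simp
  next
    case False
    have "(\<Prod>i\<in>?I-{k}. (z j - z i)/(z k - z i)) = 0"
      by (rule prod_zero) (use False that in auto)
    then show ?thesis unfolding polyL using False by simp
  qed
  have hL: "h k = (LINT t|lborel. poly (L k) t * std_normal_density t)" if "k \<in> ?I" for k
  proof -
    have "(\<Sum>j=1..n. h j * poly (L k) (z j)) = (\<Sum>j=1..n. if j = k then h k else 0)"
      by (intro sum.cong refl) (use Lval that in auto)
    also have "\<dots> = h k" using that by simp
    finally show ?thesis using ex[OF degL[of k]] by simp
  qed
  have Lneg: "poly (L (p k)) t = poly (L k) (-t)" if "k \<in> ?I" for k t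
  proof -
    have bk: "bij_betw p (?I-{k}) (?I-{p k})"
    proof (rule bij_betwI[where g=p])
      show "p \<in> ?I-{k} \<rightarrow> ?I-{p k}"
      proof
        fix i assume i: "i \<in> ?I-{k}"
        have "p i \<noteq> p k" using pp[of i] pp[OF that] i by force
        then show "p i \<in> ?I-{p k}" using pI[of i] i by blast
      qed
      show "p \<in> ?I-{p k} \<rightarrow> ?I-{k}"
      proof
        fix i assume i: "i \<in> ?I-{p k}"
        have "p i \<noteq> k" using pp[of i] i by force
        then show "p i \<in> ?I-{k}" using pI[of i] i by blast
      qed
    qed (use pp in auto)
    have "poly (L (p k)) t = (\<Prod>i\<in>?I-{k}. (t - z (p i))/(z (p k) - z (p i)))"
      unfolding polyL by (rule prod.reindex_bij_betw[OF bk, symmetric])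
    also have "\<dots> = (\<Prod>i\<in>?I-{k}. (-t - z i)/(z k - z i))"
    proof (intro prod.cong refl)
      fix i assume i: "i \<in> ?I - {k}"
      have ne: "z k - z i \<noteq> 0" using inj_onD[OF inj _ that, of i] i by auto
      show "(t - z (p i))/(z (p k) - z (p i)) = (-t - z i)/(z k - z i)"
        using pz[of i] pz[OF that] i ne by (simp add: field_simps)
    qed
    finally show ?thesis unfolding polyL .
  qed
  have hsym: "h (p k) = h k" if "k \<in> ?I" for k
  proof -
    have "h (p k) = (LINT t|lborel. poly (L k) (-t) * std_normal_density (-t))"
      using hL[OF pI[OF that]] Lneg[OF that] std_normal_density_neg by simp
    also have "\<dots> = h k" using lborel_reflect[of "\<lambda>t. poly (L k) t * std_normal_density t"] hL[OF that]
      by simp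
    finally show ?thesis .
  qed
  have "(\<Sum>k=1..n. h k * F (- z k)) = (\<Sum>k=1..n. h (p k) * F (z (p k)))"
    by (intro sum.cong refl) (simp add: hsym pz)
  also have "\<dots> = (\<Sum>k=1..n. h k * F (z k))"
    by (rule sum.reindex_bij_betw[OF bij, of "\<lambda>k. h k * F (z k)"])
  finally show ?thesis .
qed

lemma ua_deriv: assumes s: "\<sigma> > 0"
  shows "(ua \<sigma> has_real_derivative (ua \<sigma> z)\<^sup>2 / (\<sigma> * ((ua \<sigma> z)\<^sup>2 + 1))) (at z)"
proof -
  define a where "a = z/(2*\<sigma>)"
  define q where "q = sqrt (1 + a\<^sup>2)"
  have pos: "0 < 1 + (z/(2*\<sigma>))\<^sup>2" by (simp add: add_pos_nonneg)
  have d_in: "((\<lambda>z. 1 + (z/(2*\<sigma>))\<^sup>2) has_real_derivative (2*(z/(2*\<sigma>))*(1/(2*\<sigma>)))) (at z)"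
    using s by (auto intro!: derivative_eq_intros)
  have d_sq: "((\<lambda>z. sqrt (1 + (z/(2*\<sigma>))\<^sup>2)) has_real_derivative
       (inverse (sqrt (1 + (z/(2*\<sigma>))\<^sup>2)) / 2 * (2*(z/(2*\<sigma>))*(1/(2*\<sigma>))))) (at z)"
    by (rule DERIV_chain2[OF DERIV_real_sqrt[OF pos] d_in])
  have d_lin: "((\<lambda>z. z/(2*\<sigma>)) has_real_derivative 1/(2*\<sigma>)) (at z)"
    using s by (auto intro!: derivative_eq_intros)
  have d: "(ua \<sigma> has_real_derivative (1/(2*\<sigma>) + inverse q / 2 * (2*a*(1/(2*\<sigma>))))) (at z)"
    unfolding ua_def[abs_def] a_def q_def by (rule DERIV_add[OF d_lin d_sq])
  have qpos: "q > 0" unfolding q_def by (simp add: add_pos_nonneg)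
  have q2: "q\<^sup>2 = 1 + a\<^sup>2" unfolding q_def by (simp add: add_pos_nonneg)
  have u: "ua \<sigma> z = a + q" unfolding ua_def a_def q_def by simp
  have upos: "a + q > 0" using ua_pos[of \<sigma> z] u by simp
  have e: "(a+q)\<^sup>2 + 1 = 2*q*(a+q)" using q2 by (simp add: power2_eq_square algebra_simps)
  have "1/(2*\<sigma>) + inverse q / 2 * (2*a*(1/(2*\<sigma>))) = (a+q)\<^sup>2 / (\<sigma> * ((a+q)\<^sup>2 + 1))"
  proof -
    have "(a+q)\<^sup>2 / (\<sigma> * (2*q*(a+q))) = ((a+q)*(a+q)) / ((a+q)*(2*\<sigma>*q))"
      by (simp add: power2_eq_square algebra_simps)
    also have "\<dots> = (a+q)/(2*\<sigma>*q)" using upos by (rule mult_divide_mult_cancel_left[OF less_imp_neq[symmetric]])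
    also have "\<dots> = 1/(2*\<sigma>) + inverse q / 2 * (2*a*(1/(2*\<sigma>)))"
      using qpos s by (simp add: field_simps)
    finally show ?thesis unfolding e by simp
  qed
  then show ?thesis using d u by simp
qed

lemma G_sym_alg:
  fixes u A B :: real
  assumes u: "u > 0"
  shows "u powi (2*r) / (1+u\<^sup>2) + u powi (-2*r) / (1 + 1/u\<^sup>2)
       = (u powi (2*r-1) + u powi (-(2*r-1))) / (u + 1/u)"
proof -
  have a: "u powi (2*r) = u * u powi (2*r-1)"
    using power_int_add_1'[of u "2*r-1"] u by simp
  have b: "u powi (-(2*r-1)) = u * u powi (-2*r)"
    using power_int_add_1'[of u "-2*r"] u by simp
  show ?thesis unfolding a b using u by (simp add: field_simps power2_eq_square) (simp add: add_divide_distrib)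
qed

lemma G_sym:
  fixes \<mu> \<sigma> u z :: real and r :: int
  assumes u: "u > 0" and mu: "\<mu> > 0" and s: "\<sigma> > 0" and zu: "z / \<sigma> = u - 1/u"
  shows "(\<mu> * u\<^sup>2) powi r * 2 / (1+u\<^sup>2) + (\<mu> * (1/u)\<^sup>2) powi r * 2 / (1 + (1/u)\<^sup>2)
       = 2 * \<mu> powi r * poly (fibp (1/\<sigma>) (nat \<bar>2*r-1\<bar>)) z"
proof -
  define N where "N = nat \<bar>2*r-1\<bar>"
  have iN: "int N = \<bar>2*r-1\<bar>" unfolding N_def by simp
  have oddN: "odd N"
  proof
    assume "even N"
    then have "even (int N)" by simp
    then show False unfolding iN by presburger
  qed
  have m1: "(-1/u)^N = -(1/u^N)" using oddN by (simp add: power_divide)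
  have zu': "1/\<sigma> * z = u - 1/u" using zu by simp
  have f: "poly (fibp (1/\<sigma>) N) z * (u + 1/u) = u^N + 1/u^N"
    using fibp_id[of u "1/\<sigma>" z N, OF _ zu'] u m1 by simp
  have pos: "u + 1/u > 0" using u by (intro add_pos_pos) auto
  have f2: "poly (fibp (1/\<sigma>) N) z = (u powi (2*r-1) + u powi (-(2*r-1))) / (u + 1/u)"
  proof -
    have "poly (fibp (1/\<sigma>) N) z = (u^N + 1/u^N)/(u+1/u)" using f pos by (simp add: eq_divide_eq)
    moreover have "u powi (2*r-1) + u powi (-(2*r-1)) = u^N + 1/u^N"
      using powi_sym[of u "2*r-1"] u unfolding N_def by simp
    ultimately show ?thesis by simp
  qed
  have e1: "(\<mu> * u\<^sup>2) powi r = \<mu> powi r * u powi (2*r)"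
    by (simp add: power_int_mult_distrib power_int_mult[of u 2 r])
  have e2: "(\<mu> * (1/u)\<^sup>2) powi r = \<mu> powi r * u powi (-2*r)"
  proof -
    have x1: "(\<mu> * (1/u)\<^sup>2) powi r = \<mu> powi r / (u\<^sup>2) powi r"
      by (simp add: power_int_mult_distrib power_int_divide_distrib power_divide)
    have x2: "(u\<^sup>2) powi r = u powi (2*r)" using power_int_mult[of u 2 r] by simp
    have x3: "u powi (-2*r) = 1 / u powi (2*r)" using power_int_minus_divide[of u "2*r"] by simp
    show ?thesis unfolding x1 x2 x3 by simp
  qed
  have i2: "(1/u)\<^sup>2 = 1/u\<^sup>2" by (simp add: power_divide)
  have p1: "1 + u\<^sup>2 > 0" "1 + 1/u\<^sup>2 > 0" by (simp_all add: add_pos_nonneg)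
  have "(\<mu> * u\<^sup>2) powi r * 2 / (1+u\<^sup>2) + (\<mu> * (1/u)\<^sup>2) powi r * 2 / (1 + (1/u)\<^sup>2)
     = 2 * \<mu> powi r * (u powi (2*r) / (1+u\<^sup>2) + u powi (-2*r) / (1 + 1/u\<^sup>2))"
    unfolding e1 e2 unfolding i2 by (simp add: algebra_simps)
  also have "\<dots> = 2 * \<mu> powi r * poly (fibp (1/\<sigma>) N) z"
    unfolding G_sym_alg[OF u, of r] f2 ..
  finally show ?thesis unfolding N_def .
qed

lemma integrable_poly_normal:
  "integrable lborel (\<lambda>t. poly q t * std_normal_density t)"
proof -
  have "integrable lborel (\<lambda>t. \<Sum>i\<le>degree q. coeff q i * (std_normal_density t * t^i))"
    by (rule Bochner_Integration.integrable_sum, rule integrable_mult_right, rule integrable_std_normal_moment)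
  moreover have "(\<lambda>t. \<Sum>i\<le>degree q. coeff q i * (std_normal_density t * t^i))
      = (\<lambda>t. poly q t * std_normal_density t)"
    by (rule ext) (simp add: poly_altdef sum_distrib_left algebra_simps)
  ultimately show ?thesis by simp
qed

lemma key_pt:
  fixes \<gamma> \<delta> u z :: real and r :: int
  assumes g: "\<gamma> > 0" and d: "\<delta> > 0" and u: "u > 0" and zu: "z / sqrt (\<gamma>*\<delta>) = u - 1/u"
  shows "\<bar>2*(\<delta>/\<gamma>)*u^3/(sqrt (\<gamma>*\<delta>)*(u\<^sup>2+1))\<bar> * (((\<delta>/\<gamma>)*u\<^sup>2) powi r * ig_density \<gamma> \<delta> ((\<delta>/\<gamma>)*u\<^sup>2))
       = ((\<delta>/\<gamma>)*u\<^sup>2) powi r * 2 / (1+u\<^sup>2) * std_normal_density z"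
proof -
  define m where "m = sqrt (\<delta>/\<gamma>)"
  define \<sigma> where "\<sigma> = sqrt (\<gamma>*\<delta>)"
  have mpos: "m > 0" unfolding m_def using g d by simp
  have spos: "\<sigma> > 0" unfolding \<sigma>_def using g d by simp
  have m2: "m\<^sup>2 = \<delta>/\<gamma>" unfolding m_def using g d by simp
  have s2: "\<sigma>\<^sup>2 = \<gamma>*\<delta>" unfolding \<sigma>_def using g d by simp
  have sm: "\<sigma> * m = \<delta>"
  proof -
    have "\<sigma> * m = sqrt (\<gamma>*\<delta> * (\<delta>/\<gamma>))" unfolding \<sigma>_def m_def by (simp only: real_sqrt_mult)
    also have "\<gamma>*\<delta> * (\<delta>/\<gamma>) = \<delta>\<^sup>2" using g by (simp add: power2_eq_square)
    finally show ?thesis using d by simp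
  qed
  have z: "z = \<sigma> * (u - 1/u)" using zu spos unfolding \<sigma>_def[symmetric] by (simp add: field_simps)
  have ex: "- ((\<gamma> * ((\<delta>/\<gamma>)*u\<^sup>2) - \<delta>)\<^sup>2) / (2 * ((\<delta>/\<gamma>)*u\<^sup>2)) = - z\<^sup>2 / 2"
  proof -
    have "z\<^sup>2 = \<gamma>*\<delta>*(u - 1/u)\<^sup>2" unfolding z power_mult_distrib s2 ..
    then show ?thesis using g d u apply (simp add: field_simps power2_eq_square) by algebra
  qed
  have sq: "sqrt (2 * pi * ((\<delta>/\<gamma>)*u\<^sup>2) ^ 3) = sqrt (2*pi) * (m*u)^3"
  proof -
    have "((\<delta>/\<gamma>)*u\<^sup>2) ^ 3 = ((m*u)^3)\<^sup>2" unfolding m2[symmetric] by (simp add: power_mult_distrib power2_eq_square power3_eq_cube)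
    then have "sqrt (2 * pi * ((\<delta>/\<gamma>)*u\<^sup>2) ^ 3) = sqrt (2*pi) * sqrt (((m*u)^3)\<^sup>2)"
      by (simp only: real_sqrt_mult)
    also have "sqrt (((m*u)^3)\<^sup>2) = (m*u)^3" using mpos u by (simp only: real_sqrt_abs) simp
    finally show ?thesis .
  qed
  have pre: "\<bar>2*(\<delta>/\<gamma>)*u^3/(\<sigma>*(u\<^sup>2+1))\<bar> * (\<delta> / sqrt (2 * pi * ((\<delta>/\<gamma>)*u\<^sup>2) ^ 3))
      = 2 / (1+u\<^sup>2) * (1 / sqrt (2*pi))"
  proof -
    have p: "2*(\<delta>/\<gamma>)*u^3/(\<sigma>*(u\<^sup>2+1)) > 0" using g d u spos by (simp add: add_pos_nonneg)
    have ab: "\<bar>2*(\<delta>/\<gamma>)*u^3/(\<sigma>*(u\<^sup>2+1))\<bar> = 2*(\<delta>/\<gamma>)*u^3/(\<sigma>*(u\<^sup>2+1))"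
      using p by (rule abs_of_pos)
    have "2*(\<delta>/\<gamma>)*u^3/(\<sigma>*(u\<^sup>2+1)) * (\<delta> / (sqrt (2*pi) * (m*u)^3))
       = 2*m\<^sup>2*u^3/(\<sigma>*(u\<^sup>2+1)) * ((\<sigma>*m) / (sqrt (2*pi) * (m*u)^3))"
      unfolding m2[symmetric] unfolding sm[symmetric] ..
    also have "\<dots> = 2 / (1+u\<^sup>2) * (1 / sqrt (2*pi))"
    proof -
      define S where "S = sqrt (2*pi)"
      define K where "K = m\<^sup>2*u^3*\<sigma>*m"
      have K0: "K \<noteq> 0" unfolding K_def using mpos u spos by simp
      have "2*m\<^sup>2*u^3/(\<sigma>*(u\<^sup>2+1)) * ((\<sigma>*m) / (S * (m*u)^3))
          = (2*K) / (((u\<^sup>2+1)*S)*K)"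
        unfolding K_def times_divide_times_eq
        by (intro arg_cong2[where f="(/)"]) (simp_all add: power3_eq_cube power2_eq_square algebra_simps)
      also have "\<dots> = 2/((u\<^sup>2+1)*S)" by (rule mult_divide_mult_cancel_right[OF K0])
      finally show ?thesis unfolding S_def by (simp add: add.commute)
    qed
    finally show ?thesis unfolding ab sq .
  qed
  have ig: "ig_density \<gamma> \<delta> ((\<delta>/\<gamma>)*u\<^sup>2) = \<delta> / sqrt (2 * pi * ((\<delta>/\<gamma>)*u\<^sup>2) ^ 3) * exp (- z\<^sup>2 / 2)"
    unfolding ig_density_def ex ..
  define J where "J = \<bar>2*(\<delta>/\<gamma>)*u^3/(\<sigma>*(u\<^sup>2+1))\<bar>"
  define D where "D = \<delta> / sqrt (2 * pi * ((\<delta>/\<gamma>)*u\<^sup>2) ^ 3)"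
  define P where "P = ((\<delta>/\<gamma>)*u\<^sup>2) powi r"
  define E where "E = exp (- z\<^sup>2 / 2)"
  have "J * (P * (D * E)) = P * E * (J * D)" by (simp add: mult_ac)
  also have "J * D = 2 / (1+u\<^sup>2) * (1 / sqrt (2*pi))" using pre unfolding J_def D_def .
  also have "P * E * (2 / (1+u\<^sup>2) * (1 / sqrt (2*pi))) = P * 2 / (1+u\<^sup>2) * (1 / sqrt (2*pi) * E)"
    by (simp add: field_simps)
  finally show ?thesis unfolding \<sigma>_def[symmetric] ig std_normal_density_def
    unfolding J_def[symmetric] D_def[symmetric] P_def[symmetric] E_def[symmetric] .
qed

theorem theorem1:
  fixes \<gamma> \<delta> :: real and n :: nat and z h :: "nat \<Rightarrow> real"
  assumes "\<gamma> > 0" and "\<delta> > 0" and "n \<ge> 1"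
    and "gauss_hermite n z h"
  defines "\<sigma> \<equiv> sqrt (\<gamma> * \<delta>)"
  defines "x \<equiv> (\<lambda>k. \<delta> / \<gamma> * phi_inv \<sigma> (z k))"
  defines "w \<equiv> (\<lambda>k. 2 * h k / (1 + phi_inv \<sigma> (z k)))"
  shows "\<forall>r::int. 1 - int n \<le> r \<and> r \<le> int n \<longrightarrow>
           set_integrable lborel {0<..} (\<lambda>t. t powi r * ig_density \<gamma> \<delta> t) \<and>
           (LINT t:{0<..}|lborel. t powi r * ig_density \<gamma> \<delta> t) = (\<Sum>k=1..n. x k powi r * w k)"
proof (intro allI impI)
  fix r :: int
  assume rr: "1 - int n \<le> r \<and> r \<le> int n"
  have gpos: "\<gamma> > 0" and dpos: "\<delta> > 0" and n1: "n \<ge> 1" and gh: "gauss_hermite n z h"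
    using assms by auto
  define \<mu> where "\<mu> = \<delta> / \<gamma>"
  have mupos: "\<mu> > 0" unfolding \<mu>_def using gpos dpos by simp
  have spos: "\<sigma> > 0" unfolding \<sigma>_def using gpos dpos by simp
  define P where "P = fibp (1/\<sigma>) (nat \<bar>2*r-1\<bar>)"
  have degP: "degree P \<le> 2*n - 1"
  proof -
    have "nat \<bar>2*r-1\<bar> \<le> 2*n - 1" using rr n1 by linarith
    then show ?thesis using fibp_degree[of "1/\<sigma>" "nat \<bar>2*r-1\<bar>"] unfolding P_def by linarith
  qed
  define G where "G z = (\<mu> * phi_inv \<sigma> z) powi r * 2 / (1 + phi_inv \<sigma> z)" for z
  have Gform: "G z = (\<mu> * (ua \<sigma> z)\<^sup>2) powi r * 2 / (1 + (ua \<sigma> z)\<^sup>2)" for z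
    unfolding G_def phi_inv_ua[OF spos] ..
  have Gsym: "G z + G (-z) = 2 * \<mu> powi r * poly P z" for z
  proof -
    have u: "ua \<sigma> z > 0" by (rule ua_pos)
    have zu: "z / \<sigma> = ua \<sigma> z - 1 / ua \<sigma> z" using ua_diff[of \<sigma> z] spos by simp
    show ?thesis unfolding Gform ua_neg P_def by (rule G_sym[OF u mupos spos zu])
  qed
  have Gnn: "G z \<ge> 0" for z
    unfolding Gform using mupos ua_pos[of \<sigma> z] by (simp add: add_pos_nonneg)
  define I0 where "I0 = (LINT t|lborel. poly P t * std_normal_density t)"
  define Gn where "Gn z = G z * std_normal_density z" for z
  have cphi: "continuous_on UNIV (phi_inv \<sigma>)"
    unfolding phi_inv_def[abs_def] using spos by (intro continuous_intros) auto
  have phipos: "phi_inv \<sigma> z > 0" for z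
    unfolding phi_inv_ua[OF spos] using ua_pos[of \<sigma> z] by simp
  have contG: "continuous_on UNIV G"
    unfolding G_def[abs_def]
  proof (intro continuous_intros cphi)
    show "0 \<le> r \<or> (\<forall>z\<in>UNIV. \<mu> * phi_inv \<sigma> z \<noteq> 0)"
    proof (rule disjI2, intro ballI)
      fix z show "\<mu> * phi_inv \<sigma> z \<noteq> 0" using mupos phipos[of z] by simp
    qed
    show "\<forall>z\<in>UNIV. 1 + phi_inv \<sigma> z \<noteq> 0"
    proof
      fix z show "1 + phi_inv \<sigma> z \<noteq> 0" using phipos[of z] by simp
    qed
  qed
  have measGn: "Gn \<in> borel_measurable borel"
    unfolding Gn_def by (intro borel_measurable_times borel_measurable_continuous_onI contG) (auto simp: std_normal_density_def intro!: continuous_intros)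
  have intGn: "integrable lborel Gn"
  proof (rule Bochner_Integration.integrable_bound)
    show "integrable lborel (\<lambda>z. 2 * \<mu> powi r * (poly P z * std_normal_density z))"
      by (rule integrable_mult_right, rule integrable_poly_normal)
    show "Gn \<in> borel_measurable lborel" using measGn by simp
    show "AE z in lborel. norm (Gn z) \<le> norm (2 * \<mu> powi r * (poly P z * std_normal_density z))"
    proof (intro AE_I2)
      fix z
      have "norm (Gn z) = G z * std_normal_density z" unfolding Gn_def using Gnn[of z] by (simp add: normal_density_nonneg)
      also have "\<dots> \<le> (G z + G (-z)) * std_normal_density z"
        using Gnn[of "-z"] by (intro mult_right_mono) (auto simp: normal_density_nonneg)
      also have "\<dots> \<le> norm (2 * \<mu> powi r * (poly P z * std_normal_density z))"
        unfolding Gsym by simp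
      finally show "norm (Gn z) \<le> norm (2 * \<mu> powi r * (poly P z * std_normal_density z))" .
    qed
  qed
  have intGn': "integrable lborel (\<lambda>z. Gn (-z))"
    using lborel_integrable_real_affine[OF intGn, of "-1" 0] by simp
  have LGn: "(LINT z|lborel. Gn z) = \<mu> powi r * I0"
  proof -
    have "2 * (LINT z|lborel. Gn z) = (LINT z|lborel. Gn z) + (LINT z|lborel. Gn (-z))"
      using lborel_reflect[of Gn] by simp
    also have "\<dots> = (LINT z|lborel. Gn z + Gn (-z))"
      by (rule Bochner_Integration.integral_add[OF intGn intGn', symmetric])
    also have "\<dots> = (LINT z|lborel. 2 * \<mu> powi r * (poly P z * std_normal_density z))"
    proof (intro Bochner_Integration.integral_cong refl)
      fix z
      have "Gn z + Gn (-z) = (G z + G (-z)) * std_normal_density z"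
        unfolding Gn_def std_normal_density_neg by (simp add: distrib_right)
      then show "Gn z + Gn (-z) = 2 * \<mu> powi r * (poly P z * std_normal_density z)"
        unfolding Gsym by simp
    qed
    also have "\<dots> = 2 * \<mu> powi r * I0" unfolding I0_def by simp
    finally show ?thesis by simp
  qed
  have quad: "(\<Sum>k=1..n. x k powi r * w k) = \<mu> powi r * I0"
  proof -
    have "(\<Sum>k=1..n. x k powi r * w k) = (\<Sum>k=1..n. h k * G (z k))"
      by (intro sum.cong refl) (simp add: x_def w_def G_def \<mu>_def)
    also have "\<dots> = ((\<Sum>k=1..n. h k * G (z k)) + (\<Sum>k=1..n. h k * G (- z k))) / 2"
      using gh_sym[OF gh n1, of G] by simp
    also have "\<dots> = (\<Sum>k=1..n. h k * (G (z k) + G (- z k))) / 2"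
      by (simp add: sum.distrib algebra_simps)
    also have "\<dots> = \<mu> powi r * (\<Sum>k=1..n. h k * poly P (z k))"
      unfolding Gsym by (simp add: sum_distrib_left algebra_simps)
    also have "(\<Sum>k=1..n. h k * poly P (z k)) = I0"
    proof -
      have "\<forall>q :: real poly. degree q \<le> 2 * n - 1 \<longrightarrow>
        (\<Sum>k=1..n. h k * poly q (z k)) = (LINT t|lborel. poly q t * std_normal_density t)"
        using gh unfolding gauss_hermite_def by (elim conjE)
      then show ?thesis unfolding I0_def using degP by (elim allE impE)
    qed
    finally show ?thesis .
  qed
  define f where "f t = t powi r * ig_density \<gamma> \<delta> t" for t
  define g where "g z = \<mu> * (ua \<sigma> z)\<^sup>2" for z
  define g' where "g' z = 2*\<mu>*(ua \<sigma> z)^3/(\<sigma>*((ua \<sigma> z)\<^sup>2+1))" for z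
  have der: "(g has_field_derivative g' z) (at z within UNIV)" for z
  proof -
    have "((\<lambda>z. \<mu> * (ua \<sigma> z)\<^sup>2) has_real_derivative
        \<mu> * (of_nat 2 * (((ua \<sigma> z)\<^sup>2 / (\<sigma> * ((ua \<sigma> z)\<^sup>2 + 1))) * (ua \<sigma> z)^(2 - Suc 0)))) (at z)"
      by (intro DERIV_cmult DERIV_power ua_deriv[OF spos])
    moreover have "\<mu> * (of_nat 2 * (((ua \<sigma> z)\<^sup>2 / (\<sigma> * ((ua \<sigma> z)\<^sup>2 + 1))) * (ua \<sigma> z)^(2 - Suc 0))) = g' z"
      unfolding g'_def by (simp add: power2_eq_square power3_eq_cube)
    ultimately show ?thesis unfolding g_def[abs_def] by simp
  qed
  have inj: "inj_on g UNIV"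
  proof (rule inj_onI)
    fix a b assume "g a = g b"
    then have "(ua \<sigma> a)\<^sup>2 = (ua \<sigma> b)\<^sup>2" unfolding g_def using mupos by simp
    then have e: "ua \<sigma> a = ua \<sigma> b"
      by (rule power2_eq_imp_eq) (auto intro: less_imp_le ua_pos)
    have A: "ua \<sigma> a - 1/ua \<sigma> a = a/\<sigma>" by (rule ua_diff) (use spos in simp)
    have B: "ua \<sigma> b - 1/ua \<sigma> b = b/\<sigma>" by (rule ua_diff) (use spos in simp)
    have "a / \<sigma> = b / \<sigma>" using A B e by metis
    then show "a = b" using spos by simp
  qed
  have img: "g ` UNIV = {0<..}"
  proof
    show "g ` UNIV \<subseteq> {0<..}" unfolding g_def using mupos by (auto intro!: mult_pos_pos zero_less_power ua_pos)
    show "{0<..} \<subseteq> g ` UNIV"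
    proof
      fix t :: real assume "t \<in> {0<..}"
      then have tpos: "t > 0" by simp
      define v where "v = sqrt (t/\<mu>)"
      have vpos: "v > 0" unfolding v_def using tpos mupos by simp
      define z0 where "z0 = \<sigma> * (v - 1/v)"
      have a: "z0/(2*\<sigma>) = (v - 1/v)/2" unfolding z0_def using spos by simp
      have "1 + ((v - 1/v)/2)\<^sup>2 = ((v + 1/v)/2)\<^sup>2" using vpos by (simp add: field_simps power2_eq_square)
      then have sq: "sqrt (1 + ((v - 1/v)/2)\<^sup>2) = (v + 1/v)/2" using vpos by simp
      have "ua \<sigma> z0 = (v - 1/v)/2 + (v + 1/v)/2" unfolding ua_def a sq ..
      also have "\<dots> = v" by (simp add: field_simps)
      finally have "ua \<sigma> z0 = v" .
      then have "g z0 = t" unfolding g_def v_def using tpos mupos by simp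
      then show "t \<in> g ` UNIV" by (metis rangeI)
    qed
  qed
  have keyeq: "(\<lambda>z. \<bar>g' z\<bar> * f (g z)) = Gn"
  proof
    fix z
    have u: "ua \<sigma> z > 0" by (rule ua_pos)
    have zu0: "ua \<sigma> z - 1 / ua \<sigma> z = z / \<sigma>" by (rule ua_diff) (use spos in simp)
    have zu: "z / \<sigma> = ua \<sigma> z - 1 / ua \<sigma> z" using zu0 by (rule sym)
    note k = key_pt[OF gpos dpos u[unfolded \<sigma>_def] zu[unfolded \<sigma>_def], of r, folded \<sigma>_def \<mu>_def]
    show "\<bar>g' z\<bar> * f (g z) = Gn z"
      unfolding g'_def f_def g_def Gn_def Gform by (rule k)
  qed
  have cov: "f absolutely_integrable_on {0<..} \<and> integral {0<..} f = \<mu> powi r * I0"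
  proof -
    have "(\<lambda>z. \<bar>g' z\<bar> * f (g z)) absolutely_integrable_on UNIV \<and>
          integral UNIV (\<lambda>z. \<bar>g' z\<bar> * f (g z)) = \<mu> powi r * I0"
    proof
      show "(\<lambda>z. \<bar>g' z\<bar> * f (g z)) absolutely_integrable_on UNIV"
        unfolding keyeq set_integrable_def
        using integrable_completion[of Gn lborel] measGn intGn by simp
      show "integral UNIV (\<lambda>z. \<bar>g' z\<bar> * f (g z)) = \<mu> powi r * I0"
        unfolding keyeq integral_lborel[OF intGn] LGn ..
    qed
    moreover have "((\<lambda>z. \<bar>g' z\<bar> * f (g z)) absolutely_integrable_on UNIV \<and>
          integral UNIV (\<lambda>z. \<bar>g' z\<bar> * f (g z)) = \<mu> powi r * I0) \<longleftrightarrow>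
          (f absolutely_integrable_on g ` UNIV \<and> integral (g ` UNIV) f = \<mu> powi r * I0)"
    proof (rule has_absolute_integral_change_of_variables_1')
      show "UNIV \<in> sets lebesgue" by simp
      show "(g has_field_derivative g' z) (at z within UNIV)" for z by (rule der)
      show "inj_on g UNIV" by (rule inj)
    qed
    ultimately show ?thesis unfolding img by blast
  qed
  have contf: "continuous_on {0<..} f"
    unfolding f_def ig_density_def using gpos dpos
    by (intro continuous_intros) auto
  have measf: "(\<lambda>t. indicator {0<..} t *\<^sub>R f t) \<in> borel_measurable borel"
    by (rule borel_measurable_continuous_on_indicator[OF _ contf]) simp
  have ai: "set_integrable lebesgue {0<..} f" using cov by (elim conjE)
  have si: "set_integrable lborel {0<..} f"
  proof -
    have "integrable lebesgue (\<lambda>t. indicator {0<..} t *\<^sub>R f t)" using ai unfolding set_integrable_def .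
    then show ?thesis unfolding set_integrable_def
      using measf integrable_completion[of "\<lambda>t. indicator {0<..} t *\<^sub>R f t" lborel] by simp
  qed
  have "(LINT t:{0<..}|lborel. f t) = (LINT t:{0<..}|lebesgue. f t)"
    unfolding set_lebesgue_integral_def using integral_completion[of "\<lambda>t. indicator {0<..} t *\<^sub>R f t" lborel] measf
    by simp
  also have "\<dots> = integral {0<..} f"
  proof -
    show ?thesis by (rule set_lebesgue_integral_eq_integral(2)[OF ai])
  qed
  also have "\<dots> = \<mu> powi r * I0" using cov by (elim conjE)
  finally have "(LINT t:{0<..}|lborel. f t) = \<mu> powi r * I0" .
  then show "set_integrable lborel {0<..} (\<lambda>t. t powi r * ig_density \<gamma> \<delta> t) \<and>
           (LINT t:{0<..}|lborel. t powi r * ig_density \<gamma> \<delta> t) = (\<Sum>k=1..n. x k powi r * w k)"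
    using si quad unfolding f_def by simp
qed

end
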